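(* Let $G$ be a graph with a vertex $r$ that belongs to at least one but not all minimum vertex covers of $G$ (so $\mathrm{OPT}(G-r)+1=\mathrm{OPT}(G)$) and with $N[r]\subsetneq V(G)$. Let $Y$ be a minimal blocking set of $G$ with $r\notin Y$. Then at least one of the following holds: (1) $Y$ is a minimal blocking set of $G-r$; (2) $Y\cap N[r]=\emptyset$ and $Y$ is a minimal blocking set of $G-N[r]$; (3) there is a minimal blocking set $Y'\subsetneq Y$ of $G-r$ such that $\hat Y=Y\setminus Y'$ is a minimal blocking set of $G-Y'$, $\hat Y$ is not a blocking set of $G-Y'-r$, and there is a nonempty set $Z\subseteq N(r)\setminus Y'$ such that $\hat Y\cup Z$ is a minimal blocking set of $G-Y'-r$.
   Context: $\mathrm{OPT}(G)$ is the minimum vertex cover size; minimum vertex covers have size $\mathrm{OPT}(G)$. $Y\subseteq V(G)$ is a blocking set if no minimum vertex cover contains $Y$; minimal if no proper subset is a blocking set. $N(r)$ is the open and $N[r]=N(r)\cup\{r\}$ the closed neighborhood of $r$. *)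

theory Defs
  imports Main
begin

text \<open>Vertex deletion G - S is modelled by
replacing V with V - S (only edges with both ends in the vertex set count).\<close>

definition graph :: "'a set \<Rightarrow> ('a \<Rightarrow> 'a \<Rightarrow> bool) \<Rightarrow> bool" where
  "graph V E \<longleftrightarrow> finite V \<and> (\<forall>u v. E u v \<longrightarrow> E v u) \<and> (\<forall>v. \<not> E v v)"

definition vertex_cover :: "'a set \<Rightarrow> ('a \<Rightarrow> 'a \<Rightarrow> bool) \<Rightarrow> 'a set \<Rightarrow> bool" where
  "vertex_cover V E C \<longleftrightarrow> C \<subseteq> V \<and> (\<forall>u\<in>V. \<forall>v\<in>V. E u v \<longrightarrow> u \<in> C \<or> v \<in> C)"

definition OPT :: "'a set \<Rightarrow> ('a \<Rightarrow> 'a \<Rightarrow> bool) \<Rightarrow> nat" where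
  "OPT V E = (LEAST k. \<exists>C. vertex_cover V E C \<and> card C = k)"

definition min_vertex_cover :: "'a set \<Rightarrow> ('a \<Rightarrow> 'a \<Rightarrow> bool) \<Rightarrow> 'a set \<Rightarrow> bool" where
  "min_vertex_cover V E C \<longleftrightarrow> vertex_cover V E C \<and> card C = OPT V E"

definition blocking_set :: "'a set \<Rightarrow> ('a \<Rightarrow> 'a \<Rightarrow> bool) \<Rightarrow> 'a set \<Rightarrow> bool" where
  "blocking_set V E Y \<longleftrightarrow> Y \<subseteq> V \<and> \<not> (\<exists>C. min_vertex_cover V E C \<and> Y \<subseteq> C)"

definition minimal_blocking_set :: "'a set \<Rightarrow> ('a \<Rightarrow> 'a \<Rightarrow> bool) \<Rightarrow> 'a set \<Rightarrow> bool" where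
  "minimal_blocking_set V E Y \<longleftrightarrow> blocking_set V E Y \<and> (\<forall>Y'. Y' \<subset> Y \<longrightarrow> \<not> blocking_set V E Y')"

definition open_nbhd :: "'a set \<Rightarrow> ('a \<Rightarrow> 'a \<Rightarrow> bool) \<Rightarrow> 'a \<Rightarrow> 'a set" where
  "open_nbhd V E r = {v \<in> V. E r v}"

definition closed_nbhd :: "'a set \<Rightarrow> ('a \<Rightarrow> 'a \<Rightarrow> bool) \<Rightarrow> 'a \<Rightarrow> 'a set" where
  "closed_nbhd V E r = insert r (open_nbhd V E r)"

end

theory Submission
  imports Defs
begin

lemma vc_fin: "finite V \<Longrightarrow> vertex_cover V E C \<Longrightarrow> finite C"
  unfolding vertex_cover_def using finite_subset by blast

lemma opt_le: "finite V \<Longrightarrow> vertex_cover V E C \<Longrightarrow> OPT V E \<le> card C"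
  unfolding OPT_def by (rule Least_le) auto

lemma opt_ex: "finite V \<Longrightarrow> \<exists>C. min_vertex_cover V E C"
proof -
  have "vertex_cover V E V" unfolding vertex_cover_def by auto
  hence "\<exists>k C. vertex_cover V E C \<and> card C = k" by blast
  hence "\<exists>C. vertex_cover V E C \<and> card C = OPT V E"
    unfolding OPT_def by (rule LeastI_ex)
  thus ?thesis unfolding min_vertex_cover_def by blast
qed

lemma opt_eq: "finite V \<Longrightarrow> vertex_cover V E C \<Longrightarrow> (\<And>D. vertex_cover V E D \<Longrightarrow> card C \<le> card D)
  \<Longrightarrow> OPT V E = card C"
  unfolding OPT_def by (rule Least_equality) auto

lemma mvc_intro: "finite V \<Longrightarrow> vertex_cover V E C \<Longrightarrow> card C \<le> OPT V E \<Longrightarrow> min_vertex_cover V E C"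
  unfolding min_vertex_cover_def using opt_le by (metis le_antisym)

lemma mvc_le: "min_vertex_cover V E C \<Longrightarrow> vertex_cover V E D \<Longrightarrow> finite V \<Longrightarrow> card C \<le> card D"
  unfolding min_vertex_cover_def using opt_le by metis

lemma vc_union: "vertex_cover (V - S) E D \<Longrightarrow> S \<subseteq> V \<Longrightarrow> vertex_cover V E (D \<union> S)"
  unfolding vertex_cover_def by blast

lemma vc_diff: "vertex_cover V E C \<Longrightarrow> vertex_cover (V - S) E (C - S)"
  unfolding vertex_cover_def by blast

lemma vc_nbhd: "graph V E \<Longrightarrow> vertex_cover (V - closed_nbhd V E r) E D \<Longrightarrow> r \<in> V
  \<Longrightarrow> vertex_cover V E (D \<union> open_nbhd V E r)"
  unfolding vertex_cover_def graph_def closed_nbhd_def open_nbhd_def by blast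

lemma vc_nbhd_sub: "vertex_cover V E C \<Longrightarrow> r \<in> V \<Longrightarrow> r \<notin> C \<Longrightarrow> open_nbhd V E r \<subseteq> C"
  unfolding vertex_cover_def open_nbhd_def by blast

lemma vc_extend: "graph V E \<Longrightarrow> r \<in> V \<Longrightarrow> vertex_cover (V - {r}) E D \<Longrightarrow> open_nbhd V E r \<subseteq> D
  \<Longrightarrow> vertex_cover V E D"
  unfolding vertex_cover_def graph_def open_nbhd_def by blast

lemma mvc_vc: "min_vertex_cover V E C \<Longrightarrow> vertex_cover V E C"
  unfolding min_vertex_cover_def by simp
lemma mvc_card: "min_vertex_cover V E C \<Longrightarrow> card C = OPT V E"
  unfolding min_vertex_cover_def by simp
lemma mvc_fin: "finite V \<Longrightarrow> min_vertex_cover V E C \<Longrightarrow> finite C"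
  using vc_fin mvc_vc by blast

lemma G1a:
  assumes "finite V" "min_vertex_cover V E C0" "S \<subseteq> C0"
  shows "OPT (V - S) E + card S = OPT V E"
proof -
  have vc: "vertex_cover V E C0" and k: "card C0 = OPT V E" using assms(2) min_vertex_cover_def by auto
  have fC: "finite C0" using vc_fin[OF assms(1) vc] .
  have fS: "finite S" using fC assms(3) finite_subset by blast
  have SV: "S \<subseteq> V" using vc assms(3) unfolding vertex_cover_def by blast
  have c: "card (C0 - S) = card C0 - card S" using card_Diff_subset[OF fS assms(3)] .
  have cS: "card S \<le> card C0" using card_mono[OF fC assms(3)] .
  have "OPT (V - S) E = card (C0 - S)"
  proof (rule opt_eq)
    show "finite (V - S)" using assms(1) by simp
    show "vertex_cover (V - S) E (C0 - S)" using vc_diff[OF vc] .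
    fix D assume D: "vertex_cover (V - S) E D"
    have "vertex_cover V E (D \<union> S)" using vc_union[OF D SV] .
    hence "card C0 \<le> card (D \<union> S)" using mvc_le assms by blast
    also have "\<dots> \<le> card D + card S" by (rule card_Un_le)
    finally show "card (C0 - S) \<le> card D" using c by simp
  qed
  thus ?thesis using c cS k by simp
qed

lemma G1b:
  assumes "finite V" "min_vertex_cover V E C0" "S \<subseteq> C0" "min_vertex_cover (V - S) E D"
  shows "min_vertex_cover V E (D \<union> S)"
proof -
  have vc: "vertex_cover V E C0" using assms(2) min_vertex_cover_def by auto
  have SV: "S \<subseteq> V" using vc assms(3) unfolding vertex_cover_def by blast
  have D: "vertex_cover (V - S) E D" "card D = OPT (V - S) E" using assms(4) min_vertex_cover_def by auto
  show ?thesis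
  proof (rule mvc_intro[OF assms(1) vc_union[OF D(1) SV]])
    show "card (D \<union> S) \<le> OPT V E" using card_Un_le[of D S] D(2) G1a[OF assms(1-3)] by simp
  qed
qed

lemma G1c:
  assumes "finite V" "min_vertex_cover V E C0" "S \<subseteq> C0" "min_vertex_cover V E C" "S \<subseteq> C"
  shows "min_vertex_cover (V - S) E (C - S)"
proof -
  have vc: "vertex_cover V E C" "card C = OPT V E" using assms(4) min_vertex_cover_def by auto
  have fC: "finite C" using vc_fin[OF assms(1) vc(1)] .
  have fS: "finite S" using fC assms(5) finite_subset by blast
  show ?thesis
  proof (rule mvc_intro)
    show "finite (V - S)" using assms(1) by simp
    show "vertex_cover (V - S) E (C - S)" using vc_diff[OF vc(1)] .
    show "card (C - S) \<le> OPT (V - S) E"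
      using card_Diff_subset[OF fS assms(5)] vc(2) G1a[OF assms(1-3)] by simp
  qed
qed

lemma min_sub:
  assumes "finite A" "P A"
  shows "\<exists>B. B \<subseteq> A \<and> P B \<and> (\<forall>B'. B' \<subset> B \<longrightarrow> \<not> P B')"
  using assms
proof (induction A rule: finite_psubset_induct)
  case (psubset A)
  show ?case
  proof (cases "\<forall>B'. B' \<subset> A \<longrightarrow> \<not> P B'")
    case True
    have "A \<subseteq> A" by simp
    with True psubset.prems show ?thesis by blast
  next
    case False
    then obtain B' where B': "B' \<subset> A" "P B'" by blast
    have "finite B'" using B'(1) psubset.hyps finite_subset by blast
    from psubset.IH[OF B'(1) B'(2)] obtain B where
      B: "B \<subseteq> B'" "P B" "\<forall>B''. B'' \<subset> B \<longrightarrow> \<not> P B''" by blast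
    have "B \<subseteq> A" using B(1) B'(1) by blast
    with B show ?thesis by blast
  qed
qed

theorem mainTheorem20:
  fixes V :: "'a set" and E :: "'a \<Rightarrow> 'a \<Rightarrow> bool" and r :: 'a and Y :: "'a set"
  assumes "graph V E"
    and "r \<in> V"
    and "\<exists>C. min_vertex_cover V E C \<and> r \<in> C"
    and "\<exists>C. min_vertex_cover V E C \<and> r \<notin> C"
    and "closed_nbhd V E r \<subset> V"
    and "minimal_blocking_set V E Y"
    and "r \<notin> Y"
  shows "minimal_blocking_set (V - {r}) E Y
    \<or> (Y \<inter> closed_nbhd V E r = {} \<and> minimal_blocking_set (V - closed_nbhd V E r) E Y)
    \<or> (\<exists>Y'. Y' \<subset> Y \<and> minimal_blocking_set (V - {r}) E Y' \<and>
          minimal_blocking_set (V - Y') E (Y - Y') \<and>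
          \<not> blocking_set (V - Y' - {r}) E (Y - Y') \<and>
          (\<exists>Z. Z \<noteq> {} \<and> Z \<subseteq> open_nbhd V E r - Y' \<and>
               minimal_blocking_set (V - Y' - {r}) E ((Y - Y') \<union> Z)))"
proof -
  have fV: "finite V" using assms(1) unfolding graph_def by simp
  have irr: "\<And>v. \<not> E v v" using assms(1) unfolding graph_def by simp
  define N where "N = open_nbhd V E r"
  define k where "k = OPT V E"
  obtain C1 where C1: "min_vertex_cover V E C1" "r \<in> C1" using assms(3) by blast
  obtain C0 where C0: "min_vertex_cover V E C0" "r \<notin> C0" using assms(4) by blast
  have bY: "blocking_set V E Y" and Ymin: "\<And>W. W \<subset> Y \<Longrightarrow> \<not> blocking_set V E W"
    using assms(6) unfolding minimal_blocking_set_def by blast+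
  have YV: "Y \<subseteq> V" and Yblk: "\<not> (\<exists>C. min_vertex_cover V E C \<and> Y \<subseteq> C)"
    using bY unfolding blocking_set_def by blast+
  have fY: "finite Y" using YV fV finite_subset by blast
  have sub_mvc: "\<And>W. W \<subset> Y \<Longrightarrow> \<exists>C. min_vertex_cover V E C \<and> W \<subseteq> C"
  proof -
    fix W assume "W \<subset> Y"
    hence "\<not> blocking_set V E W" "W \<subseteq> V" using Ymin YV by auto
    thus "\<exists>C. min_vertex_cover V E C \<and> W \<subseteq> C" unfolding blocking_set_def by blast
  qed
  have r1: "{r} \<subseteq> C1" using C1 by simp
  have Yblk_r: "blocking_set (V - {r}) E Y"
    unfolding blocking_set_def
  proof
    show "Y \<subseteq> V - {r}" using YV assms(7) by blast
    show "\<not> (\<exists>C. min_vertex_cover (V - {r}) E C \<and> Y \<subseteq> C)"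
    proof
      assume "\<exists>C. min_vertex_cover (V - {r}) E C \<and> Y \<subseteq> C"
      then obtain D where D: "min_vertex_cover (V - {r}) E D" "Y \<subseteq> D" by blast
      have "min_vertex_cover V E (D \<union> {r})" using G1b[OF fV C1(1) r1 D(1)] .
      thus False using D(2) Yblk by blast
    qed
  qed
  show ?thesis
  proof (cases "minimal_blocking_set (V - {r}) E Y")
    case True thus ?thesis by blast
  next
    case False
    then obtain Y'' where Y'': "Y'' \<subset> Y" "blocking_set (V - {r}) E Y''"
      using Yblk_r unfolding minimal_blocking_set_def by blast
    have "finite Y''" using Y''(1) fY finite_subset by blast
    from min_sub[OF this, of "blocking_set (V - {r}) E", OF Y''(2)]
    obtain Y' where Y'0: "Y' \<subseteq> Y''" "blocking_set (V - {r}) E Y'"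
      "\<forall>B'. B' \<subset> Y' \<longrightarrow> \<not> blocking_set (V - {r}) E B'" by blast
    have Y'Y: "Y' \<subset> Y" using Y'0(1) Y''(1) by blast
    have Y'min: "minimal_blocking_set (V - {r}) E Y'"
      using Y'0 unfolding minimal_blocking_set_def by blast
    have fY': "finite Y'" using Y'Y fY finite_subset by blast
    have rY': "r \<notin> Y'" using Y'Y assms(7) by blast
    have Y'V: "Y' \<subseteq> V" using Y'Y YV by blast
    obtain C2 where C2: "min_vertex_cover V E C2" "Y' \<subseteq> C2" using sub_mvc[OF Y'Y] by blast
    have R: "\<And>C. min_vertex_cover V E C \<Longrightarrow> Y' \<subseteq> C \<Longrightarrow> r \<notin> C"
    proof
      fix C assume C: "min_vertex_cover V E C" "Y' \<subseteq> C" "r \<in> C"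
      have "min_vertex_cover (V - {r}) E (C - {r})" using G1c[OF fV C1(1) r1 C(1)] C(3) by simp
      moreover have "Y' \<subseteq> C - {r}" using C(2) rY' by blast
      ultimately show False using Y'0(2) unfolding blocking_set_def by blast
    qed
    have rC2: "r \<notin> C2" using R C2 by blast
    have optY': "OPT (V - Y') E + card Y' = k" using G1a[OF fV C2] k_def by simp
    define Yh where "Yh = Y - Y'"
    have YhV: "Yh \<subseteq> V - Y'" using YV Yh_def by blast
    have Yhmin: "minimal_blocking_set (V - Y') E Yh"
      unfolding minimal_blocking_set_def blocking_set_def
    proof (intro conjI allI impI)
      show "Yh \<subseteq> V - Y'" using YhV .
      show "\<not> (\<exists>C. min_vertex_cover (V - Y') E C \<and> Yh \<subseteq> C)"
      proof
        assume "\<exists>C. min_vertex_cover (V - Y') E C \<and> Yh \<subseteq> C"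
        then obtain D where D: "min_vertex_cover (V - Y') E D" "Yh \<subseteq> D" by blast
        have "min_vertex_cover V E (D \<union> Y')" using G1b[OF fV C2 D(1)] .
        moreover have "Y \<subseteq> D \<union> Y'" using D(2) Yh_def by blast
        ultimately show False using Yblk by blast
      qed
      fix W assume W: "W \<subset> Yh"
      have "W \<union> Y' \<subset> Y" using W Yh_def Y'Y by blast
      then obtain C where C: "min_vertex_cover V E C" "W \<union> Y' \<subseteq> C" using sub_mvc by blast
      have "min_vertex_cover (V - Y') E (C - Y')" using G1c[OF fV C2 C(1)] C(2) by blast
      moreover have "W \<subseteq> C - Y'" using C(2) W Yh_def by blast
      ultimately show "\<not> (W \<subseteq> V - Y' \<and> \<not> (\<exists>C. min_vertex_cover (V - Y') E C \<and> W \<subseteq> C))" by blast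
    qed
    have c2: "card C2 = k" using mvc_card[OF C2(1)] k_def by simp
    have fC2: "finite C2" using mvc_fin[OF fV C2(1)] .
    have cD0: "card (C2 - Y') = k - card Y'" using card_Diff_subset[OF fY' C2(2)] c2 by simp
    have vcD0: "vertex_cover (V - Y' - {r}) E (C2 - Y')"
    proof -
      have "vertex_cover (V - Y') E (C2 - Y')" using vc_diff[OF mvc_vc[OF C2(1)]] .
      hence "vertex_cover (V - Y' - {r}) E (C2 - Y' - {r})" by (rule vc_diff)
      moreover have "C2 - Y' - {r} = C2 - Y'" using rC2 by blast
      ultimately show ?thesis by simp
    qed
    have optYr: "OPT (V - Y' - {r}) E = k - card Y'"
    proof -
      have "OPT (V - Y' - {r}) E = card (C2 - Y')"
      proof (rule opt_eq)
        show "finite (V - Y' - {r})" using fV by simp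
        show "vertex_cover (V - Y' - {r}) E (C2 - Y')" using vcD0 .
        fix D assume D: "vertex_cover (V - Y' - {r}) E D"
        show "card (C2 - Y') \<le> card D"
        proof (rule ccontr)
          assume lt: "\<not> card (C2 - Y') \<le> card D"
          have rV: "{r} \<subseteq> V - Y'" using assms(2) rY' by blast
          have vc1: "vertex_cover (V - Y') E (D \<union> {r})" using vc_union[OF D rV] .
          have fD: "finite D" using vc_fin[OF _ D] fV by simp
          have "card (D \<union> {r}) \<le> card D + 1" using card_Un_le[of D "{r}"] by simp
          hence "card (D \<union> {r}) \<le> OPT (V - Y') E" using lt cD0 optY' by linarith
          hence m1: "min_vertex_cover (V - Y') E (D \<union> {r})" using mvc_intro[OF _ vc1] fV by simp
          have "min_vertex_cover V E (D \<union> {r} \<union> Y')" using G1b[OF fV C2 m1] .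
          thus False using R by blast
        qed
      qed
      thus ?thesis using cD0 by simp
    qed
    have optEq: "OPT (V - Y' - {r}) E = OPT (V - Y') E" using optYr optY' by simp
    show ?thesis
    proof (cases "blocking_set (V - Y' - {r}) E Yh")
      case True
      (* case (2) *)
      have star: "\<And>W. W \<subset> Y \<Longrightarrow> \<exists>C. min_vertex_cover V E C \<and> W \<subseteq> C \<and> r \<notin> C"
      proof -
        fix W assume W: "W \<subset> Y"
        show "\<exists>C. min_vertex_cover V E C \<and> W \<subseteq> C \<and> r \<notin> C"
        proof (cases "Y' \<subseteq> W")
          case True
          obtain C where "min_vertex_cover V E C" "W \<subseteq> C" using sub_mvc[OF W] by blast
          thus ?thesis using R True by blast
        next
          case False
          then obtain y' where y': "y' \<in> Y'" "y' \<notin> W" by blast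
          have "Y - {y'} \<subset> Y" using y' Y'Y by blast
          then obtain C where C: "min_vertex_cover V E C" "Y - {y'} \<subseteq> C" using sub_mvc by blast
          have WC: "W \<subseteq> C" using W y' C(2) by blast
          show ?thesis
          proof (cases "r \<in> C")
            case False thus ?thesis using C WC by blast
          next
            case rC: True
            have yC: "y' \<notin> C" using C Yblk by blast
            define T where "T = insert r (Y' - {y'})"
            have TC: "T \<subseteq> C" unfolding T_def using rC C(2) Y'Y by blast
            have fC: "finite C" using mvc_fin[OF fV C(1)] .
            have cT1: "card (Y' - {y'}) = card Y' - 1" using fY' y'(1) by simp
            have cT2: "card Y' > 0" using fY' y'(1) card_gt_0_iff by blast
            have cT3: "card T = Suc (card (Y' - {y'}))" unfolding T_def using fY' rY' by simp
            have cT: "card T = card Y'" using cT1 cT2 cT3 by linarith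
            have cC: "card C = k" using mvc_card[OF C(1)] k_def by simp
            have Deq: "C - T = C - Y' - {r}" unfolding T_def using yC by blast
            have "vertex_cover V E C" using mvc_vc[OF C(1)] .
            hence "vertex_cover (V - Y' - {r}) E (C - Y' - {r})" by (intro vc_diff)
            hence vcD: "vertex_cover (V - Y' - {r}) E (C - T)" using Deq by simp
            have fT: "finite T" using finite_subset[OF TC fC] .
            have "card (C - T) = card C - card T" by (rule card_Diff_subset[OF fT TC])
            hence "card (C - T) = k - card Y'" using cT cC by simp
            hence "min_vertex_cover (V - Y' - {r}) E (C - T)"
              using mvc_intro[OF _ vcD] fV optYr by simp
            moreover have "Yh \<subseteq> C - T"
            proof
              fix x assume x: "x \<in> Yh"
              hence xY: "x \<in> Y" and xY': "x \<notin> Y'" unfolding Yh_def by auto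
              have "x \<noteq> y'" using xY' y'(1) by auto
              hence "x \<in> C" using C(2) xY by auto
              moreover have "x \<noteq> r" using xY assms(7) by auto
              ultimately show "x \<in> C - T" unfolding T_def using xY' by auto
            qed
            ultimately have False using True unfolding blocking_set_def by blast
            thus ?thesis ..
          qed
        qed
      qed
      have Ynonempty: "Y \<noteq> {}" using Y'Y by blast
      have YN: "Y \<inter> N = {}"
      proof (rule ccontr)
        assume "Y \<inter> N \<noteq> {}"
        then obtain y where y: "y \<in> Y" "y \<in> N" by blast
        have "Y - {y} \<subset> Y" using y by blast
        then obtain C where C: "min_vertex_cover V E C" "Y - {y} \<subseteq> C" "r \<notin> C" using star by blast
        have "N \<subseteq> C" unfolding N_def using vc_nbhd_sub[OF mvc_vc[OF C(1)] assms(2) C(3)] .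
        hence "Y \<subseteq> C" using y C(2) by blast
        thus False using C(1) Yblk by blast
      qed
      have YNc: "Y \<inter> closed_nbhd V E r = {}" using YN assms(7) unfolding closed_nbhd_def N_def by blast
      have c0: "card C0 = k" using mvc_card[OF C0(1)] k_def by simp
      have vcC0: "vertex_cover V E C0" using mvc_vc[OF C0(1)] .
      have NC0: "N \<subseteq> C0" unfolding N_def using vc_nbhd_sub[OF vcC0 assms(2) C0(2)] .
      have fC0: "finite C0" using vc_fin[OF fV vcC0] .
      have fN: "finite N" using NC0 fC0 finite_subset by blast
      have cC0N: "card (C0 - N) = k - card N" using card_Diff_subset[OF fN NC0] c0 by simp
      have cNk: "card N \<le> k" using card_mono[OF fC0 NC0] c0 by simp
      have cl: "closed_nbhd V E r = insert r N" unfolding closed_nbhd_def N_def by simp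
      have optN: "OPT (V - closed_nbhd V E r) E = k - card N"
      proof -
        have "OPT (V - closed_nbhd V E r) E = card (C0 - N)"
        proof (rule opt_eq)
          show "finite (V - closed_nbhd V E r)" using fV by simp
          have "vertex_cover (V - closed_nbhd V E r) E (C0 - closed_nbhd V E r)" using vc_diff[OF vcC0] .
          moreover have "C0 - closed_nbhd V E r = C0 - N" unfolding cl using C0(2) by blast
          ultimately show "vertex_cover (V - closed_nbhd V E r) E (C0 - N)" by simp
          fix D assume D: "vertex_cover (V - closed_nbhd V E r) E D"
          have "vertex_cover V E (D \<union> N)" unfolding N_def using vc_nbhd[OF assms(1) D assms(2)] .
          hence "card C0 \<le> card (D \<union> N)" using mvc_le[OF C0(1)] fV by blast
          also have "\<dots> \<le> card D + card N" by (rule card_Un_le)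
          finally show "card (C0 - N) \<le> card D" using cC0N c0 by simp
        qed
        thus ?thesis using cC0N by simp
      qed
      have "minimal_blocking_set (V - closed_nbhd V E r) E Y"
        unfolding minimal_blocking_set_def blocking_set_def
      proof (intro conjI allI impI)
        show "Y \<subseteq> V - closed_nbhd V E r" using YV YNc by blast
        show "\<not> (\<exists>C. min_vertex_cover (V - closed_nbhd V E r) E C \<and> Y \<subseteq> C)"
        proof
          assume "\<exists>C. min_vertex_cover (V - closed_nbhd V E r) E C \<and> Y \<subseteq> C"
          then obtain D where D: "min_vertex_cover (V - closed_nbhd V E r) E D" "Y \<subseteq> D" by blast
          have vD: "vertex_cover (V - closed_nbhd V E r) E D" "card D = k - card N"
            using mvc_vc[OF D(1)] mvc_card[OF D(1)] optN by auto
          have v: "vertex_cover V E (D \<union> N)" unfolding N_def using vc_nbhd[OF assms(1) vD(1) assms(2)] .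
          have "card (D \<union> N) \<le> k" using card_Un_le[of D N] vD(2) cNk by simp
          hence "min_vertex_cover V E (D \<union> N)" using mvc_intro[OF fV v] k_def by simp
          thus False using D(2) Yblk by blast
        qed
        fix W assume W: "W \<subset> Y"
        obtain C where C: "min_vertex_cover V E C" "W \<subseteq> C" "r \<notin> C" using star[OF W] by blast
        have vC: "vertex_cover V E C" "card C = k" using mvc_vc[OF C(1)] mvc_card[OF C(1)] k_def by auto
        have NC: "N \<subseteq> C" unfolding N_def using vc_nbhd_sub[OF vC(1) assms(2) C(3)] .
        have fC: "finite C" using vc_fin[OF fV vC(1)] .
        have "vertex_cover (V - closed_nbhd V E r) E (C - closed_nbhd V E r)" using vc_diff[OF vC(1)] .
        moreover have "C - closed_nbhd V E r = C - N" unfolding cl using C(3) by blast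
        ultimately have v2: "vertex_cover (V - closed_nbhd V E r) E (C - N)" by simp
        have "card (C - N) = k - card N" using card_Diff_subset[OF fN NC] vC(2) by simp
        hence "min_vertex_cover (V - closed_nbhd V E r) E (C - N)" using mvc_intro[OF _ v2] fV optN by simp
        moreover have "W \<subseteq> C - N" using C(2) W YN by blast
        ultimately show "\<not> (W \<subseteq> V - closed_nbhd V E r \<and>
             \<not> (\<exists>C. min_vertex_cover (V - closed_nbhd V E r) E C \<and> W \<subseteq> C))" by blast
      qed
      thus ?thesis using YNc by blast
    next
      case notblk: False
      define N' where "N' = N - Y'"
      have onb: "open_nbhd (V - Y') E r = N'" unfolding N'_def N_def open_nbhd_def by blast
      have rVY: "r \<in> V - Y'" using assms(2) rY' by blast
      have rN: "r \<notin> N" unfolding N_def open_nbhd_def using irr by blast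
      have rYh: "r \<notin> Yh" unfolding Yh_def using assms(7) by simp
      have big: "blocking_set (V - Y' - {r}) E (Yh \<union> N')"
        unfolding blocking_set_def
      proof
        show "Yh \<union> N' \<subseteq> V - Y' - {r}" using YhV rYh rN
          unfolding N'_def N_def open_nbhd_def by blast
        show "\<not> (\<exists>C. min_vertex_cover (V - Y' - {r}) E C \<and> Yh \<union> N' \<subseteq> C)"
        proof
          assume "\<exists>C. min_vertex_cover (V - Y' - {r}) E C \<and> Yh \<union> N' \<subseteq> C"
          then obtain D where D: "min_vertex_cover (V - Y' - {r}) E D" "Yh \<union> N' \<subseteq> D" by blast
          have vD: "vertex_cover (V - Y' - {r}) E D" "card D = OPT (V - Y') E"
            using mvc_vc[OF D(1)] mvc_card[OF D(1)] optEq by auto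
          have "vertex_cover (V - Y') E D"
          proof (rule vc_extend[OF _ rVY])
            show "graph (V - Y') E" using assms(1) unfolding graph_def by simp
            show "vertex_cover (V - Y' - {r}) E D" using vD(1) .
            show "open_nbhd (V - Y') E r \<subseteq> D" using onb D(2) by blast
          qed
          hence "min_vertex_cover (V - Y') E D" using vD(2) unfolding min_vertex_cover_def by blast
          thus False using D(2) Yhmin unfolding minimal_blocking_set_def blocking_set_def by blast
        qed
      qed
      have fN': "finite N'" unfolding N'_def N_def open_nbhd_def using fV by simp
      from min_sub[OF fN', of "\<lambda>Z. blocking_set (V - Y' - {r}) E (Yh \<union> Z)"] big
      obtain Z where Z: "Z \<subseteq> N'" "blocking_set (V - Y' - {r}) E (Yh \<union> Z)"
        "\<forall>B'. B' \<subset> Z \<longrightarrow> \<not> blocking_set (V - Y' - {r}) E (Yh \<union> B')" by blast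
      have Zne: "Z \<noteq> {}" using Z(2) notblk by auto
      have Zmin: "minimal_blocking_set (V - Y' - {r}) E (Yh \<union> Z)"
        unfolding minimal_blocking_set_def
      proof (intro conjI allI impI)
        show "blocking_set (V - Y' - {r}) E (Yh \<union> Z)" using Z(2) .
        fix W assume W: "W \<subset> Yh \<union> Z"
        show "\<not> blocking_set (V - Y' - {r}) E W"
        proof (cases "Yh \<subseteq> W")
          case True
          have "W = Yh \<union> (W \<inter> Z)" using True W by blast
          moreover have "W \<inter> Z \<subset> Z" using True W by blast
          ultimately show ?thesis using Z(3) by metis
        next
          case False
          then obtain y where y: "y \<in> Yh" "y \<notin> W" by blast
          have "Yh - {y} \<subset> Yh" using y by blast
          hence "\<not> blocking_set (V - Y') E (Yh - {y})" using Yhmin unfolding minimal_blocking_set_def by blast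
          moreover have "Yh - {y} \<subseteq> V - Y'" using YhV by blast
          ultimately obtain D where D: "min_vertex_cover (V - Y') E D" "Yh - {y} \<subseteq> D"
            unfolding blocking_set_def by blast
          have "min_vertex_cover V E (D \<union> Y')" using G1b[OF fV C2 D(1)] .
          hence rD: "r \<notin> D" using R by blast
          have vD: "vertex_cover (V - Y') E D" "card D = OPT (V - Y') E" using mvc_vc[OF D(1)] mvc_card[OF D(1)] by auto
          have ND: "N' \<subseteq> D" using vc_nbhd_sub[OF vD(1) rVY rD] onb by simp
          have "vertex_cover (V - Y' - {r}) E (D - {r})" using vc_diff[OF vD(1)] .
          hence v2: "vertex_cover (V - Y' - {r}) E D" using rD by simp
          have "min_vertex_cover (V - Y' - {r}) E D" using mvc_intro[OF _ v2] fV vD(2) optEq by simp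
          moreover have "W \<subseteq> D" using W y D(2) ND Z(1) by blast
          ultimately show ?thesis unfolding blocking_set_def by blast
        qed
      qed
      have notblk': "\<not> blocking_set (V - Y' - {r}) E (Y - Y')" using notblk Yh_def by simp
      have "Z \<subseteq> open_nbhd V E r - Y'" using Z(1) N'_def N_def by simp
      hence "\<exists>Z. Z \<noteq> {} \<and> Z \<subseteq> open_nbhd V E r - Y' \<and>
               minimal_blocking_set (V - Y' - {r}) E ((Y - Y') \<union> Z)" using Zne Zmin unfolding Yh_def by blast
      thus ?thesis using Y'Y Y'min Yhmin notblk' unfolding Yh_def by blast
    qed
  qed
qed

end
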